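(* In the known-variance setup, let $p'_{ZS}(r)=\frac{\Gamma((K+1)/2)}{\Gamma(K/2)\Gamma(1/2)}\frac{2r^{K-1}}{(1+r^2)^{(K+1)/2}}$ for $r>0$. Then $$\int_0^\infty p(\mathbf y\mid r)\,p'_{ZS}(r)\,dr=\frac{C_\sigma\,e^{-N\langle\mathbf z^2\rangle/2}}{\sqrt\pi}\,\Gamma\!\left(\frac{K+1}{2}\right)\sum_{j=0}^\infty\frac1{j!}\left(\frac{N^2\hat b^2}{4}\right)^{j}U\!\left(\frac K2+j;\frac12+j;\frac N2\right).$$
   Context: Known-variance setup: known $\sigma_1,\dots,\sigma_N>0$; $z_n=y_n/\sigma_n$; $\mathbb X\in\mathbb R^{N\times K}$ with entries $X_k(c_n)/\sigma_n$, full column rank. $\langle\mathbf z^2\rangle=\mathbf z^T\mathbf z/N$, $\mathbb H=\mathbb X^T\mathbb X/N=\mathbb S\mathbb L\mathbb S^T$, $\mathbf h=\mathbb X^T\mathbf z/N$, $\hat{\mathbf b}=\mathbb L^{1/2}\mathbb S^T\mathbb H^{-1}\mathbf h$, $\hat b^2=\|\hat{\mathbf b}\|^2$, $C_\sigma=\prod_n(2\pi\sigma_n^2)^{-1/2}$. Likelihood $p(\mathbf y\mid\mathbf b)=C_\sigma\exp[-\tfrac N2(\langle\mathbf z^2\rangle+\|\mathbf b\|^2-2\hat{\mathbf b}^T\mathbf b)]$; $p(\mathbf y\mid r)=\int p(\mathbf y\mid\mathbf b)d\mu_r(\mathbf b)$ with $\mu_r$ the uniform probability measure on the radius-$r$ sphere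 of $\mathbb R^K$. $U(\alpha;\beta;x)=\frac1{\Gamma(\alpha)}\int_0^\infty e^{-xt}t^{\alpha-1}(1+t)^{\beta-\alpha-1}dt$. *)

theory Defs
  imports "HOL-Analysis.Analysis"
begin

text \<open>Known-variance setup. Index type 'n for the N data points, 'k for the K basis
functions; N = CARD('n), K = CARD('k). A $ n $ k is X_k(c_n).\<close>

definition zvec :: "real^'n \<Rightarrow> real^'n \<Rightarrow> real^'n" where
  "zvec sg y = (\<chi> n. y $ n / sg $ n)"

definition Xmat :: "real^'n \<Rightarrow> real^'k^'n \<Rightarrow> real^'k^'n" where
  "Xmat sg A = (\<chi> n k. A $ n $ k / sg $ n)"

definition z2mean :: "real^'n \<Rightarrow> real^'n \<Rightarrow> real" where
  "z2mean sg y = (zvec sg y \<bullet> zvec sg y) / real CARD('n)"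

definition Hmat :: "real^'n \<Rightarrow> real^'k^'n \<Rightarrow> real^'k^'k" where
  "Hmat sg A = (1 / real CARD('n)) *\<^sub>R (transpose (Xmat sg A) ** Xmat sg A)"

definition hvec :: "real^'n \<Rightarrow> real^'k^'n \<Rightarrow> real^'n \<Rightarrow> real^'k" where
  "hvec sg A y = (1 / real CARD('n)) *\<^sub>R (transpose (Xmat sg A) *v zvec sg y)"

definition diag_mat :: "real^'k \<Rightarrow> real^'k^'k" where
  "diag_mat lam = (\<chi> i j. if i = j then lam $ i else 0)"

definition bhat :: "real^'n \<Rightarrow> real^'k^'n \<Rightarrow> real^'n \<Rightarrow> real^'k^'k \<Rightarrow> real^'k \<Rightarrow> real^'k" where
  "bhat sg A y S lam =
     (diag_mat (\<chi> i. sqrt (lam $ i)) ** transpose S ** matrix_inv (Hmat sg A)) *v hvec sg A y"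

definition Csigma :: "real^'n \<Rightarrow> real" where
  "Csigma sg = (\<Prod>n\<in>UNIV. 1 / sqrt (2 * pi * (sg $ n)^2))"

definition lik_b :: "real^'n \<Rightarrow> real^'k^'n \<Rightarrow> real^'n \<Rightarrow> real^'k^'k \<Rightarrow> real^'k \<Rightarrow> real^'k \<Rightarrow> real" where
  "lik_b sg A y S lam b = Csigma sg *
     exp (- (real CARD('n) / 2) * (z2mean sg y + (norm b)^2 - 2 * (bhat sg A y S lam \<bullet> b)))"

text \<open>Uniform probability measure on the sphere of radius r in R^K: the image of the
uniform distribution on the unit ball under x \<mapsto> r x / |x|.\<close>
definition sphere_measure :: "real \<Rightarrow> (real^'k) measure" where
  "sphere_measure r = distr (uniform_measure lborel (ball 0 1)) borel (\<lambda>x. r *\<^sub>R (x /\<^sub>R norm x))"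

definition lik_r :: "real^'n \<Rightarrow> real^'k^'n \<Rightarrow> real^'n \<Rightarrow> real^'k^'k \<Rightarrow> real^'k \<Rightarrow> real \<Rightarrow> real" where
  "lik_r sg A y S lam r = (\<integral>b. lik_b sg A y S lam b \<partial>(sphere_measure r :: (real^'k) measure))"

definition hyperU :: "real \<Rightarrow> real \<Rightarrow> real \<Rightarrow> real" where
  "hyperU a b x = (1 / Gamma a) *
     (LBINT t:{0<..}. exp (- x * t) * t powr (a - 1) * (1 + t) powr (b - a - 1))"

definition pZS :: "nat \<Rightarrow> real \<Rightarrow> real" where
  "pZS K r = Gamma ((real K + 1) / 2) / (Gamma (real K / 2) * Gamma (1 / 2)) *
     (2 * r ^ (K - 1) / (1 + r^2) powr ((real K + 1) / 2))"

end

theory Submission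
  imports Defs "HOL-Probability.Probability"
begin


lemma meq_lessThan:
  fixes M N :: "real measure"
  assumes sets: "sets M = sets borel" "sets N = sets borel"
  and fin: "\<And>a. emeasure M {..<a} < \<infinity>"
  and eq: "\<And>a. emeasure M {..<a} = emeasure N {..<a}"
  shows "M = N"
proof (rule measure_eqI_generator_eq[where E="range lessThan" and \<Omega>=UNIV and A="\<lambda>i. {..<real i}"])
  show "Int_stable (range lessThan :: real set set)"
  proof (clarsimp simp: Int_stable_def)
    fix a b :: real
    have "{..<a} \<inter> {..<b} = {..<min a b}" by auto
    then show "{..<a} \<inter> {..<b} \<in> range lessThan" by blast
  qed
  show "sets M = sigma_sets UNIV (range lessThan)" "sets N = sigma_sets UNIV (range lessThan)"
    unfolding sets borel_Iio by simp_all
  show "(\<Union>i. {..<real i}) = UNIV"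
    by (auto intro: reals_Archimedean2)
qed (use fin eq in \<open>auto simp: less_top\<close>)

lemma ball_borel[measurable]: "ball (c::'a::metric_space) r \<in> sets borel"
  by simp

lemma nn_integral_scale:
  fixes f :: "'a::euclidean_space \<Rightarrow> ennreal"
  assumes [measurable]: "f \<in> borel_measurable borel" and c: "c \<noteq> 0"
  shows "(\<integral>\<^sup>+x. f x \<partial>lborel) = ennreal (\<bar>c\<bar>^DIM('a)) * (\<integral>\<^sup>+x. f (c *\<^sub>R x) \<partial>lborel)"
proof -
  have "(\<integral>\<^sup>+x. f x \<partial>lborel) = (\<integral>\<^sup>+x. f x \<partial>density (distr lborel borel (\<lambda>x. 0 + c *\<^sub>R x)) (\<lambda>_. \<bar>c\<bar>^DIM('a)))"
    using lborel_affine[OF c, of "0::'a"] by simp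
  also have "\<dots> = (\<integral>\<^sup>+x. ennreal (\<bar>c\<bar>^DIM('a)) * f (c *\<^sub>R x) \<partial>lborel)"
    by (simp add: nn_integral_density nn_integral_distr)
  also have "\<dots> = ennreal (\<bar>c\<bar>^DIM('a)) * (\<integral>\<^sup>+x. f (c *\<^sub>R x) \<partial>lborel)"
    by (simp add: nn_integral_cmult)
  finally show ?thesis .
qed

lemma ball_scale_indicator:
  fixes x :: "'a::real_normed_vector"
  assumes "a > 0"
  shows "indicator (ball 0 a) (a *\<^sub>R x) = (indicator (ball 0 1) x :: ennreal)"
  using assms by (auto simp: indicator_def)

lemma polar_ball:
  fixes g :: "'a::euclidean_space \<Rightarrow> ennreal"
  assumes [measurable]: "g \<in> borel_measurable borel"
  and hom: "\<And>c x. c > 0 \<Longrightarrow> g (c *\<^sub>R x) = g x" and a: "a > 0"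
  shows "(\<integral>\<^sup>+ x. g x * indicator (ball 0 a) x \<partial>lborel) = ennreal (a^DIM('a)) * (\<integral>\<^sup>+ x. g x * indicator (ball 0 1) x \<partial>lborel)"
proof -
  have "(\<integral>\<^sup>+ x. g x * indicator (ball 0 a) x \<partial>lborel) = ennreal (\<bar>a\<bar>^DIM('a)) * (\<integral>\<^sup>+ x. g (a *\<^sub>R x) * indicator (ball 0 a) (a *\<^sub>R x) \<partial>lborel)"
    by (rule nn_integral_scale) (use a in auto)
  also have "\<dots> = ennreal (a^DIM('a)) * (\<integral>\<^sup>+ x. g x * indicator (ball 0 1) x \<partial>lborel)"
    using a by (simp add: hom ball_scale_indicator)
  finally show ?thesis .
qed

lemma polar:
  fixes g :: "'a::euclidean_space \<Rightarrow> ennreal" and h :: "real \<Rightarrow> ennreal"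
  assumes [measurable]: "g \<in> borel_measurable borel" "h \<in> borel_measurable borel"
  and hom: "\<And>c x. c > 0 \<Longrightarrow> g (c *\<^sub>R x) = g x"
  and fin: "(\<integral>\<^sup>+ x. g x * indicator (ball 0 1) x \<partial>lborel) < \<infinity>"
  shows "(\<integral>\<^sup>+ x. g x * h (norm x) \<partial>lborel) =
    (\<integral>\<^sup>+ x. g x * indicator (ball 0 1) x \<partial>lborel) *
    (\<integral>\<^sup>+ r. h r * ennreal (real DIM('a) * r^(DIM('a)-1)) * indicator {0..} r \<partial>lborel)"
proof -
  define I where "I = (\<integral>\<^sup>+ x. g x * indicator (ball 0 1) x \<partial>lborel)"
  define D where "D = (\<lambda>r::real. I * ennreal (real DIM('a) * r^(DIM('a)-1)) * indicator {0..} r)"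
  have [measurable]: "D \<in> borel_measurable borel" unfolding D_def by measurable
  define M1 where "M1 = distr (density lborel g) borel (norm :: 'a \<Rightarrow> real)"
  define M2 where "M2 = density lborel D"
  have e1: "emeasure M1 {..<a} = (if a \<le> 0 then 0 else I * ennreal (a^DIM('a)))" for a
  proof -
    have "emeasure M1 {..<a} = emeasure (density lborel g) (norm -` {..<a})"
      unfolding M1_def by (subst emeasure_distr) auto
    also have "norm -` {..<a} = ball (0::'a) a" by auto
    also have "emeasure (density lborel g) (ball 0 a) = (\<integral>\<^sup>+ x. g x * indicator (ball 0 a) x \<partial>lborel)"
      by (subst emeasure_density) auto
    also have "\<dots> = (if a \<le> 0 then 0 else I * ennreal (a^DIM('a)))"
    proof (cases "a \<le> 0")
      case True
      then show ?thesis by (subst ball_empty) auto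
    next
      case False then show ?thesis
        unfolding I_def by (subst polar_ball[OF _ hom]) (auto simp: mult.commute)
    qed
    finally show ?thesis .
  qed
  have e2: "emeasure M2 {..<a} = (if a \<le> 0 then 0 else I * ennreal (a^DIM('a)))" for a
  proof -
    have "emeasure M2 {..<a} = (\<integral>\<^sup>+ r. D r * indicator {..<a} r \<partial>lborel)"
      unfolding M2_def by (subst emeasure_density) auto
    also have "\<dots> = (if a \<le> 0 then 0 else I * ennreal (a^DIM('a)))"
    proof (cases "a \<le> 0")
      case True
      then have "D r * indicator {..<a} r = 0" for r
        by (auto simp: D_def indicator_def)
      then have "(\<integral>\<^sup>+ r. D r * indicator {..<a} r \<partial>lborel) = 0"
        by (subst nn_integral_0_iff_AE) auto
      then show ?thesis using True by simp
    next
      case False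
      have "(\<integral>\<^sup>+ r. D r * indicator {..<a} r \<partial>lborel) = (\<integral>\<^sup>+ r. I * (ennreal (real DIM('a) * r^(DIM('a)-1)) * indicator {0..a} r) \<partial>lborel)"
        by (intro nn_integral_cong_AE, use AE_lborel_singleton[of a] in eventually_elim)
           (auto simp: D_def indicator_def mult.assoc)
      also have "\<dots> = I * (\<integral>\<^sup>+ r. ennreal (real DIM('a) * r^(DIM('a)-1)) * indicator {0..a} r \<partial>lborel)"
        by (rule nn_integral_cmult) measurable
      also have "(\<integral>\<^sup>+ r. ennreal (real DIM('a) * r^(DIM('a)-1)) * indicator {0..a} r \<partial>lborel) = a^DIM('a) - 0^DIM('a)"
        using False
        by (intro nn_integral_FTC_Icc[where F="\<lambda>r. r^DIM('a)"])
           (auto intro!: derivative_eq_intros simp: DIM_positive)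
      finally show ?thesis using False by (simp add: DIM_positive zero_power)
    qed
    finally show ?thesis .
  qed
  have "M1 = M2"
  proof (rule meq_lessThan)
    show "sets M1 = sets borel" "sets M2 = sets borel" unfolding M1_def M2_def by auto
    show "emeasure M1 {..<a} < \<infinity>" for a
      using fin unfolding e1 I_def by (auto simp: ennreal_mult_less_top)
    show "emeasure M1 {..<a} = emeasure M2 {..<a}" for a unfolding e1 e2 ..
  qed
  have "(\<integral>\<^sup>+ x. g x * h (norm x) \<partial>lborel) = (\<integral>\<^sup>+ r. h r \<partial>M1)"
    unfolding M1_def by (simp add: nn_integral_distr nn_integral_density mult.commute)
  also have "\<dots> = (\<integral>\<^sup>+ r. h r \<partial>M2)" using \<open>M1 = M2\<close> by simp
  also have "\<dots> = (\<integral>\<^sup>+ r. D r * h r \<partial>lborel)"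
    unfolding M2_def by (simp add: nn_integral_density)
  also have "\<dots> = I * (\<integral>\<^sup>+ r. h r * ennreal (real DIM('a) * r^(DIM('a)-1)) * indicator {0..} r \<partial>lborel)"
    unfolding D_def by (subst nn_integral_cmult[symmetric]) (auto intro!: nn_integral_cong simp: mult_ac)
  finally show ?thesis unfolding I_def .
qed


lemma subst_sq:
  fixes f :: "real \<Rightarrow> ennreal"
  assumes [measurable]: "f \<in> borel_measurable borel"
  shows "(\<integral>\<^sup>+ r. f (r^2) * ennreal (2*r) * indicator {0<..} r \<partial>lborel) =
         (\<integral>\<^sup>+ t. f t * indicator {0<..} t \<partial>lborel)"
proof -
  define M1 where "M1 = distr (density lborel (\<lambda>r. ennreal (2*r) * indicator {0<..} r)) borel (\<lambda>r::real. r^2)"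
  define M2 where "M2 = density lborel (indicator {0<..} :: real \<Rightarrow> ennreal)"
  have e1: "emeasure M1 {..<a} = (if a \<le> 0 then 0 else ennreal a)" for a
  proof -
    have [measurable]: "(\<lambda>r::real. r^2) -` {..<a} \<in> sets borel"
      by (rule measurable_sets_borel[of "\<lambda>r. r^2" borel]) auto
    have "emeasure M1 {..<a} = emeasure (density lborel (\<lambda>r. ennreal (2*r) * indicator {0<..} r)) ((\<lambda>r::real. r^2) -` {..<a})"
      unfolding M1_def by (subst emeasure_distr) auto
    also have "\<dots> = (\<integral>\<^sup>+ r. ennreal (2*r) * indicator {0<..} r * indicator ((\<lambda>r::real. r^2) -` {..<a}) r \<partial>lborel)"
      by (subst emeasure_density) auto
    also have "\<dots> = (if a \<le> 0 then 0 else ennreal a)"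
    proof (cases "a \<le> 0")
      case True
      then have "ennreal (2*r) * indicator {0<..} r * indicator ((\<lambda>r::real. r^2) -` {..<a}) r = 0" for r
        by (auto simp: indicator_def) (metis not_less order.trans zero_le_power2)
      then have "(\<integral>\<^sup>+ r. ennreal (2*r) * indicator {0<..} r * indicator ((\<lambda>r::real. r^2) -` {..<a}) r \<partial>lborel) = 0"
        by (subst nn_integral_0_iff_AE) auto
      then show ?thesis using True by simp
    next
      case False
      have "(\<integral>\<^sup>+ r. ennreal (2*r) * indicator {0<..} r * indicator ((\<lambda>r::real. r^2) -` {..<a}) r \<partial>lborel)
          = (\<integral>\<^sup>+ r. ennreal (2*r) * indicator {0..sqrt a} r \<partial>lborel)"
      proof (intro nn_integral_cong_AE, use AE_lborel_singleton[of "sqrt a"] AE_lborel_singleton[of 0] in eventually_elim)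
        case (elim r)
        have "(0 < r \<and> r^2 < a) \<longleftrightarrow> (0 \<le> r \<and> r \<le> sqrt a)"
        proof
          assume "0 < r \<and> r^2 < a" then show "0 \<le> r \<and> r \<le> sqrt a"
            using real_less_rsqrt by fastforce
        next
          assume h: "0 \<le> r \<and> r \<le> sqrt a"
          then have "r < sqrt a" using elim by auto
          then have "r^2 < (sqrt a)^2" using h by (intro power_strict_mono) auto
          then show "0 < r \<and> r^2 < a" using h elim False by auto
        qed
        then show ?case by (auto simp: indicator_def)
      qed
      also have "\<dots> = (sqrt a)^2 - 0^2"
        using False by (intro nn_integral_FTC_Icc[where F="\<lambda>r. r^2"]) (auto intro!: derivative_eq_intros)
      finally show ?thesis using False by simp
    qed
    finally show ?thesis .
  qed
  have e2: "emeasure M2 {..<a} = (if a \<le> 0 then 0 else ennreal a)" for a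
  proof -
    have "emeasure M2 {..<a} = emeasure lborel ({0<..} \<inter> {..<a})"
      unfolding M2_def by (subst emeasure_density) (auto simp: indicator_inter_arith[symmetric] mult.commute)
    also have "{0<..} \<inter> {..<a} = {0<..<a}" by auto
    finally show ?thesis by simp
  qed
  have "M1 = M2"
  proof (rule meq_lessThan)
    show "sets M1 = sets borel" "sets M2 = sets borel" unfolding M1_def M2_def by auto
    show "emeasure M1 {..<a} < \<infinity>" for a unfolding e1 by auto
    show "emeasure M1 {..<a} = emeasure M2 {..<a}" for a unfolding e1 e2 ..
  qed
  have "(\<integral>\<^sup>+ r. f (r^2) * ennreal (2*r) * indicator {0<..} r \<partial>lborel) = (\<integral>\<^sup>+ t. f t \<partial>M1)"
    unfolding M1_def by (simp add: nn_integral_distr nn_integral_density mult_ac)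
  also have "\<dots> = (\<integral>\<^sup>+ t. f t \<partial>M2)" using \<open>M1 = M2\<close> by simp
  also have "\<dots> = (\<integral>\<^sup>+ t. f t * indicator {0<..} t \<partial>lborel)"
    unfolding M2_def by (simp add: nn_integral_density mult.commute)
  finally show ?thesis .
qed

lemma gamma_nn:
  fixes s c :: real
  assumes s: "s > 0" and c: "c > 0"
  shows "(\<integral>\<^sup>+ t. ennreal (t powr (s-1) * exp (-(c*t))) * indicator {0<..} t \<partial>lborel) = ennreal (Gamma s / c powr s)"
proof -
  define h where "h = (\<lambda>t::real. ennreal (t powr (s-1) * exp (-(c*t))) * indicator {0<..} t)"
  have [measurable]: "h \<in> borel_measurable borel" unfolding h_def by measurable
  have "(\<integral>\<^sup>+ t. h t \<partial>lborel) = ennreal \<bar>1/c\<bar> * (\<integral>\<^sup>+ x. h (0 + (1/c) * x) \<partial>lborel)"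
    by (rule nn_integral_real_affine) (use c in auto)
  also have "(\<lambda>x. h (0 + (1/c) * x)) = (\<lambda>x. ennreal (c powr (1-s)) * ennreal (indicator {0..} x * x powr (s - 1) / exp x))"
  proof
    fix x :: real
    show "h (0 + (1/c) * x) = ennreal (c powr (1-s)) * ennreal (indicator {0..} x * x powr (s - 1) / exp x)"
    proof (cases "x > 0")
      case True
      have "(x/c) powr (s-1) = c powr (1-s) * x powr (s-1)"
        using True c by (simp add: powr_divide powr_minus_divide powr_diff divide_simps)
      then show ?thesis using True c
        by (simp add: h_def ennreal_mult'[symmetric] exp_minus field_simps)
    next
      case False
      then show ?thesis using c by (auto simp: h_def indicator_def zero_less_divide_iff)
    qed
  qed
  also have "(\<integral>\<^sup>+ x. ennreal (c powr (1-s)) * ennreal (indicator {0..} x * x powr (s - 1) / exp x) \<partial>lborel)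
     = ennreal (c powr (1-s)) * Gamma s"
    by (subst nn_integral_cmult) (auto simp: Gamma_conv_nn_integral_real[OF s])
  finally have "(\<integral>\<^sup>+ t. h t \<partial>lborel) = ennreal (1/c) * (ennreal (c powr (1-s)) * ennreal (Gamma s))"
    using c by simp
  also have "\<dots> = ennreal (Gamma s / c powr s)"
    using c s Gamma_real_pos[OF s]
    by (simp add: ennreal_mult'[symmetric] powr_diff field_simps)
  finally show ?thesis unfolding h_def .
qed


lemma gauss1:
  fixes a :: real
  shows "(\<integral>\<^sup>+ x. ennreal (exp (a*x - x^2/2)) \<partial>lborel) = ennreal (sqrt (2*pi) * exp (a^2/2))"
proof -
  have eq: "exp (a*x - x^2/2) = sqrt (2*pi) * exp (a^2/2) * normal_density a 1 x" for x
  proof -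
    have "a*x - x^2/2 = a^2/2 + (-((x - a)^2)/2)"
      by (simp add: power2_eq_square field_simps)
    then have "exp (a*x - x^2/2) = exp (a^2/2) * exp (-((x - a)^2)/2)"
      by (simp add: exp_add[symmetric])
    then show ?thesis by (simp add: normal_density_def)
  qed
  have "(\<integral>\<^sup>+ x. ennreal (exp (a*x - x^2/2)) \<partial>lborel) = (\<integral>\<^sup>+ x. ennreal (sqrt (2*pi) * exp (a^2/2)) * ennreal (normal_density a 1 x) \<partial>lborel)"
    by (intro nn_integral_cong) (simp add: eq ennreal_mult)
  also have "\<dots> = ennreal (sqrt (2*pi) * exp (a^2/2)) * (\<integral>\<^sup>+ x. ennreal (normal_density a 1 x) \<partial>lborel)"
    by (rule nn_integral_cmult) measurable
  also have "(\<integral>\<^sup>+ x. ennreal (normal_density a 1 x) \<partial>lborel) = 1"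
    by (subst nn_integral_eq_integral) auto
  finally show ?thesis by simp
qed

lemma gaussK:
  fixes b :: "'a::euclidean_space" and c :: real
  shows "(\<integral>\<^sup>+ x. ennreal (exp (c * (b \<bullet> x) - (norm x)^2/2)) \<partial>lborel) =
     ennreal (sqrt (2*pi) ^ DIM('a) * exp (c^2 * (norm b)^2 / 2))"
proof -
  have eq: "ennreal (exp (c * (b \<bullet> x) - (norm x)^2/2)) = (\<Prod>e\<in>Basis. ennreal (exp (c * (b \<bullet> e) * (x \<bullet> e) - (x \<bullet> e)^2/2)))" for x
  proof -
    have n: "(norm x)^2 = (\<Sum>e\<in>Basis. (x \<bullet> e)^2)"
      by (simp only: power2_norm_eq_inner) (subst euclidean_inner, simp add: power2_eq_square)
    have "c * (b \<bullet> x) - (norm x)^2/2 = (\<Sum>e\<in>Basis. c * (b \<bullet> e) * (x \<bullet> e) - (x \<bullet> e)^2/2)"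
      unfolding n euclidean_inner[of b x]
      by (simp add: sum_subtractf sum_distrib_left sum_divide_distrib mult.assoc)
    then show ?thesis by (simp add: exp_sum prod_ennreal)
  qed
  have "(\<integral>\<^sup>+ x. ennreal (exp (c * (b \<bullet> x) - (norm x)^2/2)) \<partial>lborel) =
     (\<Prod>e\<in>Basis. (\<integral>\<^sup>+ y. ennreal (exp (c * (b \<bullet> e) * y - y^2/2)) \<partial>lborel))"
    unfolding eq by (rule nn_integral_lborel_prod) auto
  also have "\<dots> = (\<Prod>e\<in>(Basis::'a set). ennreal (sqrt (2*pi) * exp ((c * (b \<bullet> e))^2/2)))"
    by (simp add: gauss1)
  also have "\<dots> = ennreal (\<Prod>e\<in>(Basis::'a set). sqrt (2*pi) * exp ((c * (b \<bullet> e))^2/2))"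
    by (rule prod_ennreal) simp
  also have "(\<Prod>e\<in>(Basis::'a set). sqrt (2*pi) * exp ((c * (b \<bullet> e))^2/2)) = sqrt (2*pi) ^ DIM('a) * exp (c^2 * (norm b)^2 / 2)"
  proof -
    have nb: "(norm b)^2 = (\<Sum>e\<in>(Basis::'a set). (b \<bullet> e)^2)"
      by (simp only: power2_norm_eq_inner) (subst euclidean_inner, simp add: power2_eq_square)
    have "(\<Sum>e\<in>(Basis::'a set). (c * (b \<bullet> e))^2/2) = c^2 * (norm b)^2 / 2"
      unfolding nb by (simp add: power_mult_distrib sum_distrib_left sum_divide_distrib)
    then show ?thesis
      by (simp add: prod.distrib exp_sum[symmetric])
  qed
  finally show ?thesis .
qed

lemma gaussK_cosh:
  fixes b :: "'a::euclidean_space" and c :: real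
  shows "(\<integral>\<^sup>+ x. ennreal (cosh (c * (b \<bullet> x)) * exp (- ((norm x)^2)/2)) \<partial>lborel) =
     ennreal (sqrt (2*pi) ^ DIM('a) * exp (c^2 * (norm b)^2 / 2))"
proof -
  have eq: "ennreal (cosh (c * (b \<bullet> x)) * exp (- ((norm x)^2)/2)) =
     ennreal (1/2) * (ennreal (exp (c * (b \<bullet> x) - (norm x)^2/2)) + ennreal (exp ((-c) * (b \<bullet> x) - (norm x)^2/2)))" for x
  proof -
    have 1: "exp (c * (b \<bullet> x) - (norm x)^2/2) = exp (c * (b \<bullet> x)) * exp (- ((norm x)^2)/2)"
      by (simp add: exp_add[symmetric])
    have 2: "exp ((-c) * (b \<bullet> x) - (norm x)^2/2) = exp (-(c * (b \<bullet> x))) * exp (- ((norm x)^2)/2)"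
      by (simp add: exp_add[symmetric])
    have r: "cosh (c * (b \<bullet> x)) * exp (- ((norm x)^2)/2) = (1/2) * (exp (c * (b \<bullet> x) - (norm x)^2/2) + exp ((-c) * (b \<bullet> x) - (norm x)^2/2))"
      unfolding 1 2 cosh_def by (simp add: algebra_simps)
    show ?thesis unfolding r by (subst ennreal_mult) auto
  qed
  have "(\<integral>\<^sup>+ x. ennreal (cosh (c * (b \<bullet> x)) * exp (- ((norm x)^2)/2)) \<partial>lborel) =
    ennreal (1/2) * ((\<integral>\<^sup>+ x. ennreal (exp (c * (b \<bullet> x) - (norm x)^2/2)) \<partial>lborel) + (\<integral>\<^sup>+ x. ennreal (exp ((-c) * (b \<bullet> x) - (norm x)^2/2)) \<partial>lborel))"
    unfolding eq by (subst nn_integral_cmult) (auto simp: nn_integral_add)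
  also have "\<dots> = ennreal (sqrt (2*pi) ^ DIM('a) * exp (c^2 * (norm b)^2 / 2))"
  proof -
    define V where "V = sqrt (2*pi) ^ DIM('a) * exp (c^2 * (norm b)^2 / 2)"
    have V: "V \<ge> 0" unfolding V_def by simp
    have "ennreal (1/2) * (ennreal V + ennreal V) = ennreal ((1/2) * (V + V))"
      using V by (simp only: ennreal_plus[symmetric] ennreal_mult[symmetric])
    also have "(1/2) * (V + V) = V" by simp
    finally show ?thesis unfolding gaussK power2_minus V_def .
  qed
  finally show ?thesis .
qed

lemma cosh_series_ennreal:
  fixes y :: real
  shows "ennreal (cosh y) = (\<Sum>j. ennreal (y^(2*j) / fact (2*j)))"
proof -
  have "(\<lambda>n. if even n then y ^ n /\<^sub>R fact n else 0) sums cosh y" by (rule cosh_converges)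
  then have "(\<lambda>j. (\<lambda>n. if even n then y ^ n /\<^sub>R fact n else 0) (2*j)) sums cosh y"
    by (subst sums_mono_reindex) (auto simp: strict_mono_def)
  then have "(\<lambda>j. y^(2*j) / fact (2*j)) sums cosh y" by (simp add: divide_inverse mult.commute)
  then show ?thesis
    by (intro suminf_ennreal_eq[symmetric]) (auto simp: power_mult)
qed

lemma exp_series_ennreal:
  fixes y :: real
  assumes "y \<ge> 0"
  shows "ennreal (exp y) = (\<Sum>j. ennreal (y^j / fact j))"
proof -
  have "(\<lambda>n. y ^ n /\<^sub>R fact n) sums exp y" by (rule exp_converges)
  then show ?thesis using assms
    by (intro suminf_ennreal_eq[symmetric]) (auto simp: divide_inverse mult.commute)
qed


lemma powser_unique_ennreal:
  fixes a d :: "nat \<Rightarrow> real"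
  assumes a: "\<And>j. a j \<ge> 0" and d: "\<And>j. d j \<ge> 0"
  and sd: "\<And>x. x \<ge> 0 \<Longrightarrow> summable (\<lambda>j. d j * x^j)"
  and eq: "\<And>x. x \<ge> 0 \<Longrightarrow> (\<Sum>j. ennreal (a j * x^j)) = (\<Sum>j. ennreal (d j * x^j))"
  shows "a = d"
proof -
  have sa: "summable (\<lambda>j. a j * x^j)" if x: "x \<ge> 0" for x
  proof (rule summable_suminf_not_top)
    show "0 \<le> a j * x^j" for j using a x by simp
    show "(\<Sum>j. ennreal (a j * x^j)) \<noteq> \<top>"
      unfolding eq[OF x] using sd[OF x] d x by (intro ennreal_suminf_neq_top) auto
  qed
  have req: "(\<Sum>j. a j * x^j) = (\<Sum>j. d j * x^j)" if x: "x \<ge> 0" for x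
  proof -
    have sa': "summable (\<lambda>j. a j * x^j)" by (rule sa[OF x])
    have sd': "summable (\<lambda>j. d j * x^j)" by (rule sd[OF x])
    have "ennreal (\<Sum>j. a j * x^j) = (\<Sum>j. ennreal (a j * x^j))"
      by (rule suminf_ennreal2[symmetric]) (use a x sa' in auto)
    also have "\<dots> = (\<Sum>j. ennreal (d j * x^j))" by (rule eq[OF x])
    also have "\<dots> = ennreal (\<Sum>j. d j * x^j)"
      by (rule suminf_ennreal2) (use d x sd' in auto)
    finally have "ennreal (\<Sum>j. a j * x^j) = ennreal (\<Sum>j. d j * x^j)" .
    then show ?thesis using a d x by (subst (asm) ennreal_inj) (auto intro!: suminf_nonneg simp: sa' sd')
  qed
  define e where "e j = a j - d j" for j
  have se: "summable (\<lambda>j. e j * x^j)" if "x \<ge> 0" for x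
    unfolding e_def left_diff_distrib using sa[OF that] sd[OF that] by (rule summable_diff)
  have sz: "(\<Sum>j. e j * x^j) = 0" if "x \<ge> 0" for x
    unfolding e_def left_diff_distrib using sa[OF that] sd[OF that] req[OF that]
    by (subst suminf_diff[symmetric]) auto
  have "e n = 0" for n
  proof (induction n rule: less_induct)
    case (less n)
    define g where "g x = (\<Sum>j. e (j+n) * x^j)" for x :: real
    have s1: "summable (\<lambda>j. e (j+n) * 1^j)"
      using summable_ignore_initial_segment[OF se[of 1], of n] by simp
    have gx: "g x = 0" if x: "x > 0" for x
    proof -
      have "0 = (\<Sum>j. e j * x^j)" using sz x by simp
      also have "\<dots> = (\<Sum>j. e (j+n) * x^(j+n)) + (\<Sum>i<n. e i * x^i)"
        using se x by (intro suminf_split_initial_segment) auto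
      also have "(\<Sum>i<n. e i * x^i) = 0" using less by simp
      also have "(\<Sum>j. e (j+n) * x^(j+n)) = (\<Sum>j. e (j+n) * x^j) * x^n"
      proof -
        have "summable (\<lambda>j. e (j+n) * x^j)"
        proof -
          have "summable (\<lambda>j. e (j+n) * x^(j+n))"
            using summable_ignore_initial_segment[OF se[of x], of n] x by simp
          then have "summable (\<lambda>j. (e (j+n) * x^(j+n)) / x^n)" by (rule summable_divide)
          then show ?thesis using x by (simp add: power_add)
        qed
        then show ?thesis by (subst suminf_mult2) (auto simp: power_add mult_ac)
      qed
      finally have "g x * x^n = 0" unfolding g_def by simp
      then show ?thesis using x by simp
    qed
    have c: "isCont g 0" unfolding g_def by (rule isCont_powser[OF s1]) simp
    have g0: "g 0 = e n" unfolding g_def by simp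
    have l1: "(g \<longlongrightarrow> g 0) (at_right 0)"
      using c unfolding isCont_def by (rule tendsto_within_subset) simp
    have l2: "(g \<longlongrightarrow> 0) (at_right 0)"
      by (rule tendsto_eventually) (use eventually_at_right_less[of "0::real"] gx in \<open>auto elim: eventually_mono\<close>)
    have "g 0 = 0" using tendsto_unique[OF _ l1 l2] by simp
    then show ?case using g0 by simp
  qed
  then show ?thesis unfolding e_def fun_eq_iff by simp
qed


definition Amom :: "'a::euclidean_space \<Rightarrow> nat \<Rightarrow> ennreal" where
  "Amom b j = (\<integral>\<^sup>+ x. ennreal ((b \<bullet> x)^(2*j) * exp (- ((norm x)^2)/2)) \<partial>lborel)"

lemma Amom_gen:
  fixes b :: "'a::euclidean_space" and c :: real
  shows "(\<Sum>j. ennreal (c^(2*j) / fact (2*j)) * Amom b j) = ennreal (sqrt (2*pi) ^ DIM('a) * exp (c^2 * (norm b)^2 / 2))"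
proof -
  have "ennreal (cosh (c * (b \<bullet> x)) * exp (- ((norm x)^2)/2)) =
      (\<Sum>j. ennreal (c^(2*j) / fact (2*j)) * ennreal ((b \<bullet> x)^(2*j) * exp (- ((norm x)^2)/2)))" for x
  proof -
    have "ennreal (cosh (c * (b \<bullet> x)) * exp (- ((norm x)^2)/2)) = ennreal (cosh (c * (b \<bullet> x))) * ennreal (exp (- ((norm x)^2)/2))"
      by (rule ennreal_mult) auto
    also have "\<dots> = (\<Sum>j. ennreal ((c * (b \<bullet> x))^(2*j) / fact (2*j)) * ennreal (exp (- ((norm x)^2)/2)))"
      unfolding cosh_series_ennreal by simp
    also have "\<dots> = (\<Sum>j. ennreal (c^(2*j) / fact (2*j)) * ennreal ((b \<bullet> x)^(2*j) * exp (- ((norm x)^2)/2)))"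
      by (intro suminf_cong) (simp add: ennreal_mult[symmetric] power_mult_distrib power_mult mult_ac)
    finally show ?thesis .
  qed
  then have "(\<integral>\<^sup>+ x. ennreal (cosh (c * (b \<bullet> x)) * exp (- ((norm x)^2)/2)) \<partial>lborel) =
     (\<integral>\<^sup>+ x. (\<Sum>j. ennreal (c^(2*j) / fact (2*j)) * ennreal ((b \<bullet> x)^(2*j) * exp (- ((norm x)^2)/2))) \<partial>lborel)"
    by simp
  also have "\<dots> = (\<Sum>j. (\<integral>\<^sup>+ x. ennreal (c^(2*j) / fact (2*j)) * ennreal ((b \<bullet> x)^(2*j) * exp (- ((norm x)^2)/2)) \<partial>lborel))"
    by (rule nn_integral_suminf) measurable
  also have "\<dots> = (\<Sum>j. ennreal (c^(2*j) / fact (2*j)) * Amom b j)"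
    unfolding Amom_def by (intro suminf_cong nn_integral_cmult) measurable
  finally show ?thesis unfolding gaussK_cosh by simp
qed

lemma Amom_val:
  fixes b :: "'a::euclidean_space"
  shows "Amom b j = ennreal (sqrt (2*pi) ^ DIM('a) * fact (2*j) * ((norm b)^2/2)^j / fact j)"
proof -
  define G where "G = sqrt (2*pi) ^ DIM('a)"
  have G: "G \<ge> 0" unfolding G_def by simp
  have fin: "Amom b j < \<infinity>" for j
  proof -
    define F where "F j = ennreal (1^(2*j) / fact (2*j)) * Amom b j" for j
    have "(\<Sum>i\<in>{j}. F i) \<le> suminf F" by (rule sum_le_suminf) (auto intro: summableI)
    then have "ennreal (1 / fact (2*j)) * Amom b j \<le> (\<Sum>j. ennreal (1^(2*j) / fact (2*j)) * Amom b j)"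
      unfolding F_def by simp
    also have "\<dots> < \<infinity>" unfolding Amom_gen by simp
    finally have "ennreal (1 / fact (2*j)) * Amom b j < \<infinity>" .
    moreover have "(fact (2*j)::real) > 0" by simp
    ultimately show ?thesis
      by (auto simp: ennreal_mult_less_top ennreal_eq_0_iff)
  qed
  define \<alpha> where "\<alpha> j = enn2real (Amom b j)" for j
  have A\<alpha>: "Amom b j = ennreal (\<alpha> j)" for j
    unfolding \<alpha>_def using fin[of j] by (simp add: less_top)
  have \<alpha>0: "\<alpha> j \<ge> 0" for j unfolding \<alpha>_def by simp
  define a where "a j = \<alpha> j / fact (2*j)" for j
  define d where "d j = G * ((norm b)^2/2)^j / fact j" for j
  have "a = d"
  proof (rule powser_unique_ennreal)
    show "a j \<ge> 0" for j unfolding a_def using \<alpha>0 by simp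
    show "d j \<ge> 0" for j unfolding d_def using G by simp
    show "summable (\<lambda>j. d j * x^j)" if "x \<ge> 0" for x
    proof -
      have "summable (\<lambda>j. ((norm b)^2/2 * x)^j / fact j)"
        using summable_exp[of "(norm b)^2/2*x"] by (simp only: divide_inverse_commute)
      then have "summable (\<lambda>j. G * (((norm b)^2/2 * x)^j / fact j))"
        by (rule summable_mult)
      moreover have "d j * x^j = G * (((norm b)^2/2 * x)^j / fact j)" for j
        unfolding d_def power_mult_distrib by (simp add: field_simps)
      ultimately show ?thesis by simp
    qed
    show "(\<Sum>j. ennreal (a j * x^j)) = (\<Sum>j. ennreal (d j * x^j))" if x: "x \<ge> 0" for x
    proof -
      have "(\<Sum>j. ennreal (a j * x^j)) = (\<Sum>j. ennreal ((sqrt x)^(2*j) / fact (2*j)) * Amom b j)"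
        unfolding A\<alpha> a_def using x \<alpha>0
        by (intro suminf_cong) (simp add: ennreal_mult[symmetric] power_mult real_sqrt_pow2)
      also have "\<dots> = ennreal (G * exp ((sqrt x)^2 * (norm b)^2 / 2))"
        unfolding Amom_gen G_def ..
      also have "\<dots> = ennreal G * ennreal (exp ((norm b)^2 / 2 * x))"
        using x G by (simp add: ennreal_mult[symmetric] mult_ac)
      also have "ennreal (exp ((norm b)^2 / 2 * x)) = (\<Sum>j. ennreal (((norm b)^2 / 2 * x)^j / fact j))"
        using x by (intro exp_series_ennreal) simp
      also have "ennreal G * \<dots> = (\<Sum>j. ennreal G * ennreal (((norm b)^2 / 2 * x)^j / fact j))"
        by simp
      also have "\<dots> = (\<Sum>j. ennreal (d j * x^j))"
        unfolding d_def using G x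
        by (intro suminf_cong) (simp add: ennreal_mult[symmetric] power_mult_distrib power_divide mult_ac)
      finally show ?thesis .
    qed
  qed
  then have "\<alpha> j = G * fact (2*j) * ((norm b)^2/2)^j / fact j"
    unfolding a_def d_def fun_eq_iff by (auto dest!: spec[of _ j] simp: field_simps)
  then show ?thesis unfolding A\<alpha> G_def by simp
qed


definition Imom :: "'a::euclidean_space \<Rightarrow> nat \<Rightarrow> ennreal" where
  "Imom b j = (\<integral>\<^sup>+ x. ennreal ((b \<bullet> sgn x)^(2*j)) * indicator (ball 0 1) x \<partial>lborel)"

definition Rmom :: "nat \<Rightarrow> nat \<Rightarrow> ennreal" where
  "Rmom D j = (\<integral>\<^sup>+ r. ennreal (r^(2*j) * exp (- (r^2)/2)) * ennreal (real D * r^(D-1)) * indicator {0..} r \<partial>lborel)"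

lemma even_pow_nonneg: "(y::real)^(2*j) \<ge> 0"
  by (simp add: power_mult)

lemma Imom_le: "Imom (b::'a::euclidean_space) j \<le> ennreal ((norm b)^(2*j)) * emeasure lborel (ball (0::'a) 1)"
proof -
  have "Imom b j \<le> (\<integral>\<^sup>+ x. ennreal ((norm b)^(2*j)) * indicator (ball (0::'a) 1) x \<partial>lborel)"
    unfolding Imom_def
  proof (rule nn_integral_mono)
    fix x :: 'a
    have "\<bar>b \<bullet> sgn x\<bar> \<le> norm b * norm (sgn x)" by (rule Cauchy_Schwarz_ineq2)
    also have "\<dots> \<le> norm b" by (simp add: norm_sgn)
    finally have "\<bar>b \<bullet> sgn x\<bar>^(2*j) \<le> (norm b)^(2*j)" by (intro power_mono) auto
    then have "(b \<bullet> sgn x)^(2*j) \<le> (norm b)^(2*j)" by (simp add: power_even_abs)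
    then show "ennreal ((b \<bullet> sgn x)^(2*j)) * indicator (ball 0 1) x \<le> ennreal ((norm b)^(2*j)) * indicator (ball 0 1) x"
      by (intro mult_right_mono ennreal_leI) auto
  qed
  also have "\<dots> = ennreal ((norm b)^(2*j)) * emeasure lborel (ball (0::'a) 1)"
    by (simp add: nn_integral_cmult_indicator)
  finally show ?thesis .
qed

lemma Imom_fin: "Imom (b::'a::euclidean_space) j < \<infinity>"
  using Imom_le[of b j] emeasure_lborel_ball_finite[of "0::'a" 1]
  by (simp add: ennreal_mult_less_top le_less_trans)

lemma Amom_polar: "Amom (b::'a::euclidean_space) j = Imom b j * Rmom DIM('a) j"
proof -
  have eq: "ennreal ((b \<bullet> x)^(2*j) * exp (- ((norm x)^2)/2)) =
      ennreal ((b \<bullet> sgn x)^(2*j)) * ennreal ((norm x)^(2*j) * exp (- ((norm x)^2)/2))" for x :: 'a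
  proof -
    have "b \<bullet> x = norm x * (b \<bullet> sgn x)"
      by (cases "x = 0") (auto simp: sgn_div_norm inner_scaleR_right)
    then have "(b \<bullet> x)^(2*j) * exp (- ((norm x)^2)/2) = (b \<bullet> sgn x)^(2*j) * ((norm x)^(2*j) * exp (- ((norm x)^2)/2))"
      by (simp add: power_mult_distrib)
    then show ?thesis by (simp add: ennreal_mult even_pow_nonneg mult.assoc)
  qed
  have "Amom b j = (\<integral>\<^sup>+ x. ennreal ((b \<bullet> sgn x)^(2*j)) * (\<lambda>r. ennreal (r^(2*j) * exp (- (r^2)/2))) (norm x) \<partial>lborel)"
    unfolding Amom_def eq by simp
  also have "\<dots> = Imom b j * Rmom DIM('a) j"
    unfolding Imom_def Rmom_def
  proof (rule polar)
    show "(\<lambda>x. ennreal ((b \<bullet> sgn x) ^ (2 * j))) \<in> borel_measurable borel" by measurable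
    show "(\<lambda>r. ennreal (r ^ (2 * j) * exp (- (r^2)/2))) \<in> borel_measurable borel" by measurable
    show "ennreal ((b \<bullet> sgn (c *\<^sub>R x)) ^ (2 * j)) = ennreal ((b \<bullet> sgn x) ^ (2 * j))" if "c > 0" for c and x :: 'a
      using that by (simp add: sgn_scaleR)
    show "(\<integral>\<^sup>+ x. ennreal ((b \<bullet> sgn x) ^ (2 * j)) * indicator (ball 0 1) x \<partial>lborel) < \<infinity>"
      using Imom_fin[of b j] unfolding Imom_def .
  qed
  finally show ?thesis .
qed




lemma ennreal_mult3: "0 \<le> a \<Longrightarrow> 0 \<le> b \<Longrightarrow> 0 \<le> c \<Longrightarrow> ennreal a * ennreal b * ennreal c = ennreal (a*b*c)"
  by (simp add: ennreal_mult)

lemma Rmom_val: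
  assumes D: "D \<ge> 1"
  shows "Rmom D j = ennreal (real D / 2 * 2 powr (real D/2 + real j) * Gamma (real D/2 + real j))"
proof -
  define s where "s = real D/2 + real j"
  have s: "s > 0" unfolding s_def using D by simp
  define f where "f t = ennreal (real D/2) * ennreal (t powr (s-1) * exp (-((1/2)*t)))" for t :: real
  have [measurable]: "f \<in> borel_measurable borel" unfolding f_def by measurable
  have key: "r^(2*j) * exp (- (r^2)/2) * (real D * r^(D-1)) = real D/2 * ((r^2) powr (s-1) * exp (-((1/2)*(r^2)))) * (2*r)"
    if r: "r > 0" for r :: real
  proof -
    have a: "r^2 = r powr 2" using r by (simp add: powr_numeral)
    have "(r^2) powr (s-1) = r powr (2*(s-1))" unfolding a by (simp add: powr_powr)
    moreover have "r powr (2*(s-1) + 1) = r powr (2*(s-1)) * r"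
      using r by (subst powr_add) simp
    ultimately have "(r^2) powr (s-1) * r = r powr (2*(s-1) + 1)" by simp
    also have "2*(s-1) + 1 = real (2*j + (D-1))" unfolding s_def using D by (simp add: of_nat_diff)
    also have "r powr real (2*j + (D-1)) = r^(2*j) * r^(D-1)"
      using r by (subst powr_realpow) (auto simp: power_add)
    finally have "(r^2) powr (s-1) * r = r^(2*j) * r^(D-1)" .
    then show ?thesis by (simp add: field_simps)
  qed
  have "Rmom D j = (\<integral>\<^sup>+ r. f (r^2) * ennreal (2*r) * indicator {0<..} r \<partial>lborel)"
    unfolding Rmom_def
  proof (intro nn_integral_cong_AE, use AE_lborel_singleton[of 0] in eventually_elim)
    case (elim r)
    show ?case
    proof (cases "r > 0")
      case True
      have "ennreal (r^(2*j) * exp (- (r^2)/2)) * ennreal (real D * r^(D-1)) =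
            ennreal (r^(2*j) * exp (- (r^2)/2) * (real D * r^(D-1)))"
        using True by (simp add: ennreal_mult)
      also have "\<dots> = ennreal (real D/2 * ((r^2) powr (s-1) * exp (-((1/2)*(r^2)))) * (2*r))"
        by (simp only: key[OF True])
      also have "\<dots> = f (r^2) * ennreal (2*r)"
        unfolding f_def by (rule ennreal_mult3[symmetric]) (use True in auto)
      finally show ?thesis using True by simp
    next
      case False
      then show ?thesis using elim by (auto simp: indicator_def)
    qed
  qed
  also have "\<dots> = (\<integral>\<^sup>+ t. f t * indicator {0<..} t \<partial>lborel)"
    by (rule subst_sq) measurable
  also have "\<dots> = ennreal (real D/2) * (\<integral>\<^sup>+ t. ennreal (t powr (s-1) * exp (-((1/2)*t))) * indicator {0<..} t \<partial>lborel)"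
    unfolding f_def by (subst nn_integral_cmult[symmetric]) (auto simp: mult.assoc)
  also have "\<dots> = ennreal (real D/2) * ennreal (Gamma s / (1/2) powr s)"
    using s by (subst gamma_nn) auto
  also have "Gamma s / (1/2) powr s = 2 powr s * Gamma s"
    by (simp add: powr_divide)
  also have "ennreal (real D/2) * ennreal (2 powr s * Gamma s) = ennreal (real D/2 * (2 powr s * Gamma s))"
    using Gamma_real_pos[OF s] by (intro ennreal_mult[symmetric]) auto
  finally show ?thesis unfolding s_def by (simp add: mult.assoc)
qed


definition mcoef :: "nat \<Rightarrow> real \<Rightarrow> nat \<Rightarrow> real" where
  "mcoef D nb j = fact (2*j) * nb^(2*j) * Gamma (real D/2) / (4^j * fact j * Gamma (real D/2 + real j))"

lemma mcoef_nonneg: "nb \<ge> 0 \<Longrightarrow> D \<ge> 1 \<Longrightarrow> mcoef D nb j \<ge> 0"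
  unfolding mcoef_def by (intro divide_nonneg_pos mult_nonneg_nonneg mult_pos_pos Gamma_real_pos) auto

lemma Imom_val:
  fixes b :: "'a::euclidean_space"
  shows "Imom b j = Imom b 0 * ennreal (mcoef DIM('a) (norm b) j)"
proof -
  define D where "D = DIM('a)"
  have D: "D \<ge> 1" unfolding D_def using DIM_positive[where 'a='a] by linarith
  define G where "G = sqrt (2*pi) ^ D"
  have G: "G > 0" unfolding G_def by simp
  define \<rho> where "\<rho> j = real D / 2 * 2 powr (real D/2 + real j) * Gamma (real D/2 + real j)" for j
  have \<rho>: "\<rho> j > 0" for j unfolding \<rho>_def using D by (intro mult_pos_pos Gamma_real_pos) auto
  define \<iota> where "\<iota> j = enn2real (Imom b j)" for j
  have I\<iota>: "Imom b j = ennreal (\<iota> j)" for j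
    unfolding \<iota>_def using Imom_fin[of b j] by (simp add: less_top)
  have \<iota>0: "\<iota> j \<ge> 0" for j unfolding \<iota>_def by simp
  have prod: "\<iota> j * \<rho> j = G * fact (2*j) * ((norm b)^2/2)^j / fact j" for j
  proof -
    have "ennreal (G * fact (2*j) * ((norm b)^2/2)^j / fact j) = ennreal (\<iota> j) * ennreal (\<rho> j)"
      using Amom_polar[of b j] unfolding Amom_val Rmom_val[OF D[unfolded D_def]] I\<iota>
      by (simp add: G_def \<rho>_def D_def)
    also have "\<dots> = ennreal (\<iota> j * \<rho> j)" using \<iota>0 \<rho> by (simp add: ennreal_mult less_imp_le)
    finally show ?thesis using \<iota>0[of j] \<rho>[of j] G
      by (subst (asm) ennreal_inj) (auto intro: less_imp_le mult_nonneg_nonneg)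
  qed
  have m\<rho>: "mcoef D (norm b) j * \<rho> j = \<rho> 0 * (fact (2*j) * ((norm b)^2/2)^j / fact j)"
  proof -
    have p: "2 powr (real D/2 + real j) = 2 powr (real D/2) * 2^j"
      by (simp add: powr_add powr_realpow)
    have g: "Gamma (real D/2 + real j) > 0" "Gamma (real D/2) > 0" using D by (auto intro: Gamma_real_pos)
    have four: "(4::real)^j = 2^j * 2^j" by (simp add: power_mult_distrib[symmetric])
    have sq: "(norm b ^ j)^2 = ((norm b)^2)^j" by (simp add: power_mult[symmetric] mult.commute)
    show ?thesis unfolding mcoef_def \<rho>_def p four
      using g by (simp add: field_simps power_divide power_mult sq)
  qed
  have "\<iota> j = \<iota> 0 * mcoef D (norm b) j"
  proof -
    have "\<iota> j * \<rho> j = (\<iota> 0 * mcoef D (norm b) j) * \<rho> j"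
    proof -
      have "(\<iota> 0 * mcoef D (norm b) j) * \<rho> j = \<iota> 0 * \<rho> 0 * (fact (2*j) * ((norm b)^2/2)^j / fact j)"
        using m\<rho> by (simp add: mult_ac)
      also have "\<dots> = G * (fact (2*j) * ((norm b)^2/2)^j / fact j)" using prod[of 0] by simp
      also have "\<dots> = \<iota> j * \<rho> j" using prod[of j] by simp
      finally show ?thesis by (rule sym)
    qed
    then show ?thesis using \<rho>[of j] by simp
  qed
  then show ?thesis unfolding I\<iota> D_def using \<iota>0 mcoef_nonneg[OF _ D, of "norm b" j]
    by (simp add: ennreal_mult D_def)
qed


lemma sph_sym:
  fixes b :: "'a::euclidean_space" and a :: real
  shows "(\<integral>\<^sup>+ x. ennreal (exp (a * (b \<bullet> sgn x))) * indicator (ball 0 1) x \<partial>lborel) =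
     (\<integral>\<^sup>+ x. ennreal (exp ((-a) * (b \<bullet> sgn x))) * indicator (ball (0::'a) 1) x \<partial>lborel)"
proof -
  have "(\<integral>\<^sup>+ x. ennreal (exp (a * (b \<bullet> sgn x))) * indicator (ball 0 1) x \<partial>lborel) =
    ennreal (\<bar>-1\<bar>^DIM('a)) * (\<integral>\<^sup>+ x. ennreal (exp (a * (b \<bullet> sgn ((-1) *\<^sub>R x)))) * indicator (ball (0::'a) 1) ((-1) *\<^sub>R x) \<partial>lborel)"
    by (rule nn_integral_scale) auto
  also have "\<dots> = (\<integral>\<^sup>+ x. ennreal (exp ((-a) * (b \<bullet> sgn x))) * indicator (ball (0::'a) 1) x \<partial>lborel)"
    by (simp add: sgn_minus indicator_def)
  finally show ?thesis .
qed

lemma sph_exp: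
  fixes b :: "'a::euclidean_space" and a :: real
  shows "(\<integral>\<^sup>+ x. ennreal (exp (a * (b \<bullet> sgn x))) * indicator (ball 0 1) x \<partial>lborel) =
     Imom b 0 * (\<Sum>j. ennreal ((a * norm b / 2)^(2*j) * Gamma (real DIM('a)/2) / (fact j * Gamma (real DIM('a)/2 + real j))))"
proof -
  define E where "E a = (\<integral>\<^sup>+ x. ennreal (exp (a * (b \<bullet> sgn x))) * indicator (ball (0::'a) 1) x \<partial>lborel)" for a
  have "(\<integral>\<^sup>+ x. ennreal (cosh (a * (b \<bullet> sgn x))) * indicator (ball (0::'a) 1) x \<partial>lborel) =
     (\<integral>\<^sup>+ x. ennreal (1/2) * (ennreal (exp (a * (b \<bullet> sgn x))) * indicator (ball (0::'a) 1) x +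
                             ennreal (exp ((-a) * (b \<bullet> sgn x))) * indicator (ball (0::'a) 1) x) \<partial>lborel)"
  proof (intro nn_integral_cong)
    fix x :: 'a
    have "ennreal (cosh (a * (b \<bullet> sgn x))) = ennreal ((1/2) * (exp (a * (b \<bullet> sgn x)) + exp ((-a) * (b \<bullet> sgn x))))"
      by (simp add: cosh_def)
    also have "\<dots> = ennreal (1/2) * (ennreal (exp (a * (b \<bullet> sgn x))) + ennreal (exp ((-a) * (b \<bullet> sgn x))))"
      by (subst ennreal_mult) auto
    finally show "ennreal (cosh (a * (b \<bullet> sgn x))) * indicator (ball (0::'a) 1) x =
       ennreal (1/2) * (ennreal (exp (a * (b \<bullet> sgn x))) * indicator (ball (0::'a) 1) x +
                             ennreal (exp ((-a) * (b \<bullet> sgn x))) * indicator (ball (0::'a) 1) x)"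
      by (simp add: distrib_right mult.assoc)
  qed
  also have "\<dots> = ennreal (1/2) * (E a + E (-a))"
    unfolding E_def by (subst nn_integral_cmult) (auto simp: nn_integral_add)
  also have "E (-a) = E a" unfolding E_def by (rule sph_sym[symmetric])
  also have "ennreal (1/2) * (E a + E a) = E a"
  proof -
    have "ennreal (1/2) * (E a + E a) = (ennreal (1/2) * 2) * E a"
      by (simp add: mult_2[symmetric] mult.assoc)
    also have "ennreal (1/2) * 2 = ennreal ((1/2) * 2)" by (subst ennreal_mult) auto
    also have "ennreal ((1/2) * 2) = 1" by simp
    finally show ?thesis by simp
  qed
  finally have Ecosh: "E a = (\<integral>\<^sup>+ x. ennreal (cosh (a * (b \<bullet> sgn x))) * indicator (ball (0::'a) 1) x \<partial>lborel)" ..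
  also have "\<dots> = (\<integral>\<^sup>+ x. (\<Sum>j. ennreal (a^(2*j) / fact (2*j)) * (ennreal ((b \<bullet> sgn x)^(2*j)) * indicator (ball (0::'a) 1) x)) \<partial>lborel)"
  proof (intro nn_integral_cong)
    fix x :: 'a
    have "ennreal (cosh (a * (b \<bullet> sgn x))) = (\<Sum>j. ennreal (a^(2*j) / fact (2*j)) * ennreal ((b \<bullet> sgn x)^(2*j)))"
      unfolding cosh_series_ennreal
      by (intro suminf_cong) (simp add: ennreal_mult[symmetric] even_pow_nonneg power_mult_distrib)
    then show "ennreal (cosh (a * (b \<bullet> sgn x))) * indicator (ball (0::'a) 1) x =
      (\<Sum>j. ennreal (a^(2*j) / fact (2*j)) * (ennreal ((b \<bullet> sgn x)^(2*j)) * indicator (ball (0::'a) 1) x))"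
      by (simp add: mult.assoc[symmetric])
  qed
  also have "\<dots> = (\<Sum>j. (\<integral>\<^sup>+ x. ennreal (a^(2*j) / fact (2*j)) * (ennreal ((b \<bullet> sgn x)^(2*j)) * indicator (ball (0::'a) 1) x) \<partial>lborel))"
    by (rule nn_integral_suminf) measurable
  also have "\<dots> = (\<Sum>j. ennreal (a^(2*j) / fact (2*j)) * Imom b j)"
    unfolding Imom_def by (intro suminf_cong nn_integral_cmult) measurable
  also have "\<dots> = (\<Sum>j. Imom b 0 * ennreal ((a * norm b / 2)^(2*j) * Gamma (real DIM('a)/2) / (fact j * Gamma (real DIM('a)/2 + real j))))"
  proof (intro suminf_cong)
    fix j
    have "a^(2*j) / fact (2*j) * mcoef DIM('a) (norm b) j = (a * norm b / 2)^(2*j) * Gamma (real DIM('a)/2) / (fact j * Gamma (real DIM('a)/2 + real j))"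
    proof -
      have four: "(4::real)^j = 2^(2*j)" by (simp add: power_mult)
      show ?thesis unfolding mcoef_def four by (simp add: power_mult_distrib power_divide field_simps)
    qed
    moreover have "a^(2*j) / fact (2*j) \<ge> 0" by (simp add: even_pow_nonneg)
    moreover have "mcoef DIM('a) (norm b) j \<ge> 0"
      using DIM_positive[where 'a='a] by (intro mcoef_nonneg) auto
    ultimately show "ennreal (a^(2*j) / fact (2*j)) * Imom b j = Imom b 0 * ennreal ((a * norm b / 2)^(2*j) * Gamma (real DIM('a)/2) / (fact j * Gamma (real DIM('a)/2 + real j)))"
      by (subst Imom_val) (simp add: ennreal_mult[symmetric] mult_ac)
  qed
  also have "\<dots> = Imom b 0 * (\<Sum>j. ennreal ((a * norm b / 2)^(2*j) * Gamma (real DIM('a)/2) / (fact j * Gamma (real DIM('a)/2 + real j))))"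
    by simp
  finally show ?thesis unfolding E_def .
qed


lemma hyperU_nn:
  fixes a b x :: real
  assumes a: "a > 0" and x: "x > 0" and g: "b - a - 1 \<le> 0"
  shows "(\<integral>\<^sup>+ t. ennreal (exp (- x * t) * t powr (a - 1) * (1 + t) powr (b - a - 1)) * indicator {0<..} t \<partial>lborel)
           = ennreal (Gamma a * hyperU a b x)"
    and "hyperU a b x \<ge> 0" and "hyperU a b x \<le> x powr (-a)"
proof -
  define f where "f t = exp (- x * t) * t powr (a - 1) * (1 + t) powr (b - a - 1)" for t :: real
  have [measurable]: "f \<in> borel_measurable borel" unfolding f_def by measurable
  have f0: "f t \<ge> 0" for t unfolding f_def by simp
  define I where "I = (\<integral>\<^sup>+ t. ennreal (f t) * indicator {0<..} t \<partial>lborel)"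
  have "I \<le> (\<integral>\<^sup>+ t. ennreal (t powr (a-1) * exp (-(x*t))) * indicator {0<..} t \<partial>lborel)"
    unfolding I_def
  proof (rule nn_integral_mono)
    fix t :: real
    show "ennreal (f t) * indicator {0<..} t \<le> ennreal (t powr (a-1) * exp (-(x*t))) * indicator {0<..} t"
    proof (cases "t > 0")
      case True
      have "(1 + t) powr (b - a - 1) \<le> 1 powr (b - a - 1)"
        using True g by (intro powr_mono2') auto
      then have "f t \<le> t powr (a-1) * exp (-(x*t))"
        unfolding f_def by (simp add: mult_left_le mult.commute mult.left_commute)
      then show ?thesis by (intro mult_right_mono ennreal_leI) auto
    qed auto
  qed
  also have "\<dots> = ennreal (Gamma a / x powr a)" using a x by (rule gamma_nn)
  finally have Ile: "I \<le> ennreal (Gamma a / x powr a)" .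
  then have Ifin: "I < \<infinity>" using le_less_trans by fastforce
  have ind: "(\<lambda>t. ennreal (indicator {0<..} t * f t)) = (\<lambda>t. ennreal (f t) * indicator {0<..} t)"
    by (auto simp: indicator_def fun_eq_iff)
  have "(LBINT t:{0<..}. f t) = enn2real I"
    unfolding set_lebesgue_integral_def I_def
    by (subst integral_eq_nn_integral) (auto simp: f0 ind)
  then have hU: "hyperU a b x = 1 / Gamma a * enn2real I"
    unfolding hyperU_def f_def by simp
  have Ga: "Gamma a > 0" using a by (rule Gamma_real_pos)
  have "I = ennreal (enn2real I)" using Ifin by (simp add: less_top)
  also have "enn2real I = Gamma a * hyperU a b x" unfolding hU using Ga by simp
  finally show "(\<integral>\<^sup>+ t. ennreal (exp (- x * t) * t powr (a - 1) * (1 + t) powr (b - a - 1)) * indicator {0<..} t \<partial>lborel)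
           = ennreal (Gamma a * hyperU a b x)" unfolding I_def f_def .
  show "hyperU a b x \<ge> 0" unfolding hU using Ga by simp
  have "enn2real I \<le> Gamma a / x powr a"
    using Ile Ifin Ga x by (simp add: enn2real_le)
  then show "hyperU a b x \<le> x powr (-a)"
    unfolding hU using Ga x by (simp add: field_simps powr_minus)
qed


lemma powr_sq_aux:
  fixes r :: real and K j :: nat
  assumes r: "r > 0" and K: "K \<ge> 1"
  shows "r^(2*j) * r^(K-1) = (r^2) powr (real K/2 + real j - 1) * r"
proof -
  define e where "e = real K/2 + real j - 1"
  have a: "r^2 = r powr 2" using r by (simp add: powr_numeral)
  have "(r^2) powr e * r = r powr (2*e) * r" unfolding a by (simp add: powr_powr)
  also have "\<dots> = r powr (2*e + 1)" using r by (subst powr_add) simp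
  also have "2*e + 1 = real (2*j + (K-1))" unfolding e_def using K by (simp add: of_nat_diff)
  also have "r powr real (2*j + (K-1)) = r^(2*j) * r^(K-1)"
    using r by (subst powr_realpow) (auto simp: power_add)
  finally show ?thesis unfolding e_def by simp
qed

lemma ennreal_mult3': "0 \<le> a \<Longrightarrow> 0 \<le> b \<Longrightarrow> 0 \<le> c \<Longrightarrow> ennreal (a*(b*c)) = ennreal a * (ennreal b * ennreal c)"
  by (simp add: ennreal_mult)

lemma zs_term:
  fixes x :: real and K j :: nat
  assumes K: "K \<ge> 1" and x: "x > 0"
  shows "(\<integral>\<^sup>+ r. ennreal (exp (- x * r^2) * r^(2*j) * pZS K r) * indicator {0<..} r \<partial>lborel) =
     ennreal (Gamma ((real K + 1) / 2) / (Gamma (real K / 2) * Gamma (1 / 2)) * (Gamma (real K/2 + real j) * hyperU (real K/2 + real j) (1/2 + real j) x))"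
proof -
  define P where "P = Gamma ((real K + 1) / 2) / (Gamma (real K / 2) * Gamma (1 / 2))"
  have P: "P > 0" unfolding P_def using K by (intro divide_pos_pos mult_pos_pos Gamma_real_pos) auto
  define \<alpha> where "\<alpha> = real K/2 + real j"
  define \<beta> where "\<beta> = 1/2 + real j"
  have \<alpha>: "\<alpha> > 0" unfolding \<alpha>_def using K by simp
  have \<beta>\<alpha>: "\<beta> - \<alpha> - 1 = - ((real K + 1) / 2)" unfolding \<alpha>_def \<beta>_def by (simp add: field_simps)
  define g where "g t = ennreal (exp (- x * t) * t powr (\<alpha> - 1) * (1 + t) powr (\<beta> - \<alpha> - 1))" for t :: real
  have [measurable]: "g \<in> borel_measurable borel" unfolding g_def by measurable
  have "(\<integral>\<^sup>+ r. ennreal (exp (- x * r^2) * r^(2*j) * pZS K r) * indicator {0<..} r \<partial>lborel) =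
        (\<integral>\<^sup>+ r. ennreal P * (g (r^2) * ennreal (2*r) * indicator {0<..} r) \<partial>lborel)"
  proof (intro nn_integral_cong)
    fix r :: real
    show "ennreal (exp (- x * r^2) * r^(2*j) * pZS K r) * indicator {0<..} r = ennreal P * (g (r^2) * ennreal (2*r) * indicator {0<..} r)"
    proof (cases "r > 0")
      case True
      have eqR: "exp (- x * r^2) * r^(2*j) * pZS K r = P * ((exp (- x * r^2) * (r^2) powr (\<alpha> - 1) * (1 + r^2) powr (\<beta> - \<alpha> - 1)) * (2*r))"
      proof -
        have e1: "r^(2*j) * r^(K-1) = (r^2) powr (\<alpha> - 1) * r" unfolding \<alpha>_def using powr_sq_aux[OF True K] .
        have e2: "1 / (1 + r^2) powr ((real K + 1) / 2) = (1 + r^2) powr (\<beta> - \<alpha> - 1)"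
          unfolding \<beta>\<alpha> by (simp add: powr_minus_divide)
        have "exp (- x * r^2) * r^(2*j) * pZS K r = P * (exp (- x * r^2) * (r^(2*j) * r^(K-1)) * (1 / (1 + r^2) powr ((real K + 1) / 2)) * 2)"
          unfolding pZS_def P_def by (simp add: field_simps)
        also have "\<dots> = P * ((exp (- x * r^2) * (r^2) powr (\<alpha> - 1) * (1 + r^2) powr (\<beta> - \<alpha> - 1)) * (2*r))"
          unfolding e1 e2 by (simp add: mult_ac)
        finally show ?thesis .
      qed
      have "ennreal (exp (- x * r^2) * r^(2*j) * pZS K r) = ennreal P * (g (r^2) * ennreal (2*r))"
        unfolding eqR g_def by (rule ennreal_mult3') (use True P in auto)
      then show ?thesis using True by simp
    qed auto
  qed
  also have "\<dots> = ennreal P * (\<integral>\<^sup>+ r. g (r^2) * ennreal (2*r) * indicator {0<..} r \<partial>lborel)"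
    by (rule nn_integral_cmult) measurable
  also have "(\<integral>\<^sup>+ r. g (r^2) * ennreal (2*r) * indicator {0<..} r \<partial>lborel) = (\<integral>\<^sup>+ t. g t * indicator {0<..} t \<partial>lborel)"
    by (rule subst_sq) measurable
  also have "\<dots> = ennreal (Gamma \<alpha> * hyperU \<alpha> \<beta> x)"
    unfolding g_def using \<alpha> x \<beta>\<alpha> by (intro hyperU_nn(1)) auto
  finally show ?thesis
    unfolding P_def[symmetric] \<alpha>_def[symmetric] \<beta>_def[symmetric]
    using P Gamma_real_pos[OF \<alpha>] hyperU_nn(2)[OF \<alpha> x, of \<beta>] \<beta>\<alpha>
    by (subst ennreal_mult) auto
qed


definition Sser :: "nat \<Rightarrow> real \<Rightarrow> real \<Rightarrow> ennreal" where
  "Sser K nb a = (\<Sum>j. ennreal ((a * nb / 2)^(2*j) * Gamma (real K/2) / (fact j * Gamma (real K/2 + real j))))"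

lemma Csigma_nonneg: "Csigma sg \<ge> 0"
  unfolding Csigma_def by (intro prod_nonneg) auto

lemma ball_meas_pos: "emeasure lborel (ball (0::'a::euclidean_space) 1) \<noteq> 0"
proof -
  have "measure lborel (ball (0::'a) 1) > 0" using content_ball_pos[of 1 "0::'a"] by simp
  then show ?thesis
    using emeasure_lborel_ball_finite[of "0::'a" 1]
    by (simp add: emeasure_eq_ennreal_measure)
qed

lemma ball_meas_fin: "emeasure lborel (ball (0::'a::euclidean_space) 1) \<noteq> top"
  using emeasure_lborel_ball_finite[of "0::'a" 1] by simp

lemma sph_exp_k:
  fixes bh :: "real^'k"
  shows "(\<integral>\<^sup>+ x. ennreal (exp (a * (bh \<bullet> sgn x))) * indicator (ball 0 1) x \<partial>lborel) =
    emeasure lborel (ball (0::real^'k) 1) * Sser CARD('k) (norm bh) a"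
proof -
  have "Imom bh 0 = emeasure lborel (ball (0::real^'k) 1)"
    unfolding Imom_def by simp
  then show ?thesis using sph_exp[of a bh] unfolding Sser_def by simp
qed

lemma Sser_fin:
  fixes bh :: "real^'k"
  shows "Sser CARD('k) (norm bh) a < \<infinity>"
proof -
  define V where "V = emeasure lborel (ball (0::real^'k) 1)"
  have "V * Sser CARD('k) (norm bh) a = (\<integral>\<^sup>+ x. ennreal (exp (a * (bh \<bullet> sgn x))) * indicator (ball 0 1) x \<partial>lborel)"
    unfolding V_def sph_exp_k ..
  also have "\<dots> \<le> (\<integral>\<^sup>+ x. ennreal (exp (\<bar>a\<bar> * norm bh)) * indicator (ball (0::real^'k) 1) x \<partial>lborel)"
  proof (rule nn_integral_mono)
    fix x :: "real^'k"
    have "a * (bh \<bullet> sgn x) \<le> \<bar>a\<bar> * \<bar>bh \<bullet> sgn x\<bar>" by (metis abs_ge_self abs_mult)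
    also have "\<bar>bh \<bullet> sgn x\<bar> \<le> norm bh * norm (sgn x)" by (rule Cauchy_Schwarz_ineq2)
    also have "\<dots> \<le> norm bh" by (simp add: norm_sgn)
    finally have "a * (bh \<bullet> sgn x) \<le> \<bar>a\<bar> * norm bh" by (simp add: mult_left_mono)
    then show "ennreal (exp (a * (bh \<bullet> sgn x))) * indicator (ball 0 1) x \<le> ennreal (exp (\<bar>a\<bar> * norm bh)) * indicator (ball 0 1) x"
      by (intro mult_right_mono ennreal_leI) auto
  qed
  also have "\<dots> = ennreal (exp (\<bar>a\<bar> * norm bh)) * V"
    unfolding V_def by (simp add: nn_integral_cmult_indicator)
  also have "\<dots> < \<infinity>" using ball_meas_fin[where 'a="real^'k"] unfolding V_def
    by (simp add: ennreal_mult_less_top less_top)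
  finally have "V * Sser CARD('k) (norm bh) a < \<infinity>" .
  then show ?thesis using ball_meas_pos[where 'a="real^'k"] unfolding V_def
    by (auto simp: ennreal_mult_less_top)
qed


lemma lik_r_eq:
  fixes sg y :: "real^'n" and A :: "real^'k^'n" and S :: "real^'k^'k" and lam :: "real^'k"
  shows "lik_r sg A y S lam r = Csigma sg * exp (- (real CARD('n)/2) * z2mean sg y) * exp (- (real CARD('n)/2) * r^2)
     * enn2real (Sser CARD('k) (norm (bhat sg A y S lam)) (real CARD('n) * r))"
proof -
  define U where "U = uniform_measure lborel (ball (0::real^'k) 1)"
  define bh where "bh = bhat sg A y S lam"
  define N where "N = real CARD('n)"
  define c1 where "c1 = Csigma sg * exp (- (N/2) * z2mean sg y) * exp (- (N/2) * r^2)"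
  have [measurable]: "lik_b sg A y S lam \<in> borel_measurable borel" unfolding lik_b_def by measurable
  have "lik_r sg A y S lam r = (\<integral>x. lik_b sg A y S lam (r *\<^sub>R (x /\<^sub>R norm x)) \<partial>U)"
    unfolding lik_r_def sphere_measure_def U_def by (subst integral_distr) auto
  also have "\<dots> = (\<integral>x. c1 * exp ((N * r) * (bh \<bullet> sgn x)) \<partial>U)"
  proof (rule integral_cong_AE)
    show "(\<lambda>x. lik_b sg A y S lam (r *\<^sub>R (x /\<^sub>R norm x))) \<in> borel_measurable U" unfolding U_def by measurable
    show "(\<lambda>x. c1 * exp ((N * r) * (bh \<bullet> sgn x))) \<in> borel_measurable U" unfolding U_def by measurable
    have "AE x in U. x \<noteq> 0"
      unfolding U_def by (rule AE_uniform_measureI) (use AE_lborel_singleton[of "0::real^'k"] in \<open>auto elim: eventually_mono\<close>)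
    then show "AE x in U. lik_b sg A y S lam (r *\<^sub>R (x /\<^sub>R norm x)) = c1 * exp ((N * r) * (bh \<bullet> sgn x))"
    proof (rule eventually_mono)
      fix x :: "real^'k" assume x: "x \<noteq> 0"
      have n: "(norm (r *\<^sub>R sgn x))^2 = r^2" using x by (simp add: norm_sgn power_mult_distrib)
      have eqn: "- (N/2) * (z2mean sg y + (norm (r *\<^sub>R sgn x))^2 - 2 * (bh \<bullet> (r *\<^sub>R sgn x)))
          = - (N/2) * z2mean sg y + (- (N/2) * r^2) + (N * r) * (bh \<bullet> sgn x)"
        unfolding n by (simp add: algebra_simps)
      have e: "exp (- (N/2) * (z2mean sg y + (norm (r *\<^sub>R sgn x))^2 - 2 * (bh \<bullet> (r *\<^sub>R sgn x))))
          = exp (- (N/2) * z2mean sg y) * exp (- (N/2) * r^2) * exp ((N * r) * (bh \<bullet> sgn x))"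
        unfolding eqn by (simp only: exp_add)
      show "lik_b sg A y S lam (r *\<^sub>R (x /\<^sub>R norm x)) = c1 * exp ((N * r) * (bh \<bullet> sgn x))"
        unfolding lik_b_def c1_def bh_def[symmetric] N_def[symmetric] sgn_div_norm[symmetric]
        by (subst e) (simp add: mult.assoc)
    qed
  qed
  also have "\<dots> = c1 * (\<integral>x. exp ((N * r) * (bh \<bullet> sgn x)) \<partial>U)" by simp
  also have "(\<integral>x. exp ((N * r) * (bh \<bullet> sgn x)) \<partial>U) = enn2real (\<integral>\<^sup>+x. ennreal (exp ((N * r) * (bh \<bullet> sgn x))) \<partial>U)"
    unfolding U_def by (rule integral_eq_nn_integral) auto
  also have "(\<integral>\<^sup>+x. ennreal (exp ((N * r) * (bh \<bullet> sgn x))) \<partial>U) =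
      (\<integral>\<^sup>+x. ennreal (exp ((N * r) * (bh \<bullet> sgn x))) * indicator (ball 0 1) x \<partial>lborel) / emeasure lborel (ball (0::real^'k) 1)"
    unfolding U_def by (rule nn_integral_uniform_measure) auto
  also have "\<dots> = Sser CARD('k) (norm bh) (N * r)"
    unfolding sph_exp_k using ball_meas_pos[where 'a="real^'k"] ball_meas_fin[where 'a="real^'k"]
    by (subst mult.commute) (rule ennreal_mult_divide_eq)
  finally show ?thesis unfolding c1_def bh_def N_def .
qed


lemma pZS_nonneg: "K \<ge> 1 \<Longrightarrow> r \<ge> 0 \<Longrightarrow> pZS K r \<ge> 0"
  unfolding pZS_def
  by (intro mult_nonneg_nonneg divide_nonneg_nonneg less_imp_le[OF Gamma_real_pos]) auto

theorem mainTheorem13: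
  fixes sg y :: "real^'n" and A :: "real^'k^'n" and S :: "real^'k^'k" and lam :: "real^'k"
  assumes sigma_pos: "\<And>n. sg $ n > 0"
    and full_rank: "rank (Xmat sg A) = CARD('k)"
    and S_orth: "orthogonal_matrix S"
    and H_decomp: "Hmat sg A = S ** diag_mat lam ** transpose S"
  shows "(LBINT r:{0<..}. lik_r sg A y S lam r * pZS CARD('k) r) =
     Csigma sg * exp (- real CARD('n) * z2mean sg y / 2) / sqrt pi
       * Gamma ((real CARD('k) + 1) / 2)
       * (\<Sum>j. 1 / fact j * ((real CARD('n))^2 * (norm (bhat sg A y S lam))^2 / 4) ^ j
              * hyperU (real CARD('k) / 2 + real j) (1 / 2 + real j) (real CARD('n) / 2))"
proof -
  define K where "K = CARD('k)"
  define N where "N = real CARD('n)"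
  define nb where "nb = norm (bhat sg A y S lam)"
  define c0 where "c0 = Csigma sg * exp (- (N/2) * z2mean sg y)"
  define co where "co j = (N * nb / 2)^(2*j) * Gamma (real K/2) / (fact j * Gamma (real K/2 + real j))" for j
  define P where "P = Gamma ((real K + 1) / 2) / (Gamma (real K / 2) * Gamma (1 / 2))"
  define U where "U j = hyperU (real K/2 + real j) (1/2 + real j) (N/2)" for j
  define s where "s j = 1 / fact j * (N^2 * nb^2 / 4)^j * U j" for j
  define c where "c = Csigma sg * exp (- N * z2mean sg y / 2) / sqrt pi * Gamma ((real K + 1) / 2)"
  define F where "F r = c0 * exp (- (N/2) * r^2) * enn2real (Sser K nb (N*r)) * pZS K r" for r
  have K: "K \<ge> 1" unfolding K_def using card_ge_0_finite[of "UNIV::'k set"] by simp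
  have N: "N > 0" unfolding N_def by simp
  have c0: "c0 \<ge> 0" unfolding c0_def using Csigma_nonneg[of sg] by simp
  have nb: "nb \<ge> 0" unfolding nb_def by simp
  have co: "co j \<ge> 0" for j unfolding co_def using K
    by (intro mult_nonneg_nonneg divide_nonneg_nonneg less_imp_le[OF Gamma_real_pos]) (auto simp: even_pow_nonneg)
  have \<alpha>: "real K/2 + real j > 0" for j using K by simp
  have \<beta>\<alpha>: "(1/2 + real j) - (real K/2 + real j) - 1 \<le> 0" for j using K by simp
  have U0: "U j \<ge> 0" for j unfolding U_def using hyperU_nn(2)[OF \<alpha> _ \<beta>\<alpha>] N by simp
  have s0: "s j \<ge> 0" for j unfolding s_def using U0[of j] by simp
  have c: "c \<ge> 0" unfolding c_def using Csigma_nonneg[of sg] K by (intro mult_nonneg_nonneg divide_nonneg_nonneg less_imp_le[OF Gamma_real_pos]) auto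
  have [measurable]: "(\<lambda>r. Sser K nb (N*r)) \<in> borel_measurable borel" unfolding Sser_def by measurable
  have [measurable]: "pZS K \<in> borel_measurable borel" unfolding pZS_def by measurable
  have [measurable]: "F \<in> borel_measurable borel" unfolding F_def by measurable

  have step1: "(LBINT r:{0<..}. lik_r sg A y S lam r * pZS CARD('k) r) = (LBINT r:{0<..}. F r)"
    unfolding lik_r_eq F_def c0_def N_def K_def nb_def ..
  also have "\<dots> = enn2real (\<integral>\<^sup>+ r. ennreal (indicator {0<..} r * F r) \<partial>lborel)"
    unfolding set_lebesgue_integral_def
  proof (subst integral_eq_nn_integral)
    show "AE r in lborel. 0 \<le> indicator {0<..} r *\<^sub>R F r"
      unfolding F_def using c0 pZS_nonneg[OF K] by (auto simp: indicator_def)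
  qed auto
  also have "(\<integral>\<^sup>+ r. ennreal (indicator {0<..} r * F r) \<partial>lborel) =
     (\<integral>\<^sup>+ r. (\<Sum>j. ennreal (c0 * co j) * (ennreal (exp (- (N/2) * r^2) * r^(2*j) * pZS K r) * indicator {0<..} r)) \<partial>lborel)"
  proof (intro nn_integral_cong)
    fix r :: real
    show "ennreal (indicator {0<..} r * F r) = (\<Sum>j. ennreal (c0 * co j) * (ennreal (exp (- (N/2) * r^2) * r^(2*j) * pZS K r) * indicator {0<..} r))"
    proof (cases "r > 0")
      case True
      have pz: "pZS K r \<ge> 0" using pZS_nonneg[OF K] True by simp
      have "ennreal (indicator {0<..} r * F r) = ennreal (c0 * exp (- (N/2) * r^2) * pZS K r) * ennreal (enn2real (Sser K nb (N*r)))"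
        using True c0 pz unfolding F_def by (simp add: ennreal_mult[symmetric] mult_ac)
      also have "ennreal (enn2real (Sser K nb (N*r))) = Sser K nb (N*r)"
        using Sser_fin[of "bhat sg A y S lam" "N*r"] unfolding K_def nb_def by (simp add: less_top)
      also have "ennreal (c0 * exp (- (N/2) * r^2) * pZS K r) * Sser K nb (N*r) =
          (\<Sum>j. ennreal (c0 * exp (- (N/2) * r^2) * pZS K r) * ennreal ((N * r * nb / 2)^(2*j) * Gamma (real K/2) / (fact j * Gamma (real K/2 + real j))))"
        unfolding Sser_def by simp
      also have "\<dots> = (\<Sum>j. ennreal (c0 * co j) * (ennreal (exp (- (N/2) * r^2) * r^(2*j) * pZS K r) * indicator {0<..} r))"
      proof (intro suminf_cong)
        fix j
        have "(N * r * nb / 2)^(2*j) = (N * nb / 2)^(2*j) * r^(2*j)"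
          by (simp add: power_mult_distrib[symmetric] mult_ac)
        then have "c0 * exp (- (N/2) * r^2) * pZS K r * ((N * r * nb / 2)^(2*j) * Gamma (real K/2) / (fact j * Gamma (real K/2 + real j)))
           = (c0 * co j) * (exp (- (N/2) * r^2) * r^(2*j) * pZS K r)"
          unfolding co_def by (simp add: field_simps)
        moreover have "(N * r * nb / 2)^(2*j) * Gamma (real K/2) / (fact j * Gamma (real K/2 + real j)) \<ge> 0"
          using K by (intro divide_nonneg_pos mult_nonneg_nonneg mult_pos_pos Gamma_real_pos) (auto simp: even_pow_nonneg)
        ultimately show "ennreal (c0 * exp (- (N/2) * r^2) * pZS K r) * ennreal ((N * r * nb / 2)^(2*j) * Gamma (real K/2) / (fact j * Gamma (real K/2 + real j)))
            = ennreal (c0 * co j) * (ennreal (exp (- (N/2) * r^2) * r^(2*j) * pZS K r) * indicator {0<..} r)"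
          using True c0 co[of j] pz
          by (simp add: ennreal_mult[symmetric] even_pow_nonneg)
      qed
      finally show ?thesis .
    next
      case False
      then show ?thesis by simp
    qed
  qed
  also have "\<dots> = (\<Sum>j. (\<integral>\<^sup>+ r. ennreal (c0 * co j) * (ennreal (exp (- (N/2) * r^2) * r^(2*j) * pZS K r) * indicator {0<..} r) \<partial>lborel))"
    by (rule nn_integral_suminf) measurable
  also have "\<dots> = (\<Sum>j. ennreal (c * s j))"
  proof (intro suminf_cong)
    fix j
    have "(\<integral>\<^sup>+ r. ennreal (c0 * co j) * (ennreal (exp (- (N/2) * r^2) * r^(2*j) * pZS K r) * indicator {0<..} r) \<partial>lborel)
       = ennreal (c0 * co j) * (\<integral>\<^sup>+ r. ennreal (exp (- (N/2) * r^2) * r^(2*j) * pZS K r) * indicator {0<..} r \<partial>lborel)"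
      by (rule nn_integral_cmult) measurable
    also have "(\<integral>\<^sup>+ r. ennreal (exp (- (N/2) * r^2) * r^(2*j) * pZS K r) * indicator {0<..} r \<partial>lborel)
       = ennreal (P * (Gamma (real K/2 + real j) * U j))"
      unfolding P_def U_def using zs_term[OF K, of "N/2" j] N by simp
    also have "ennreal (c0 * co j) * ennreal (P * (Gamma (real K/2 + real j) * U j)) = ennreal (c * s j)"
    proof -
      have g1: "Gamma (real K/2) > 0" "Gamma (real K/2 + real j) > 0" using K by (auto intro: Gamma_real_pos)
      have pw: "(N * nb / 2)^(2*j) = (N^2 * nb^2 / 4)^j"
        by (simp add: power_mult power_mult_distrib power_divide)
      have "c0 * co j * (P * (Gamma (real K/2 + real j) * U j)) = c * s j"
        unfolding c0_def co_def P_def c_def s_def pw Gamma_one_half_real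
        using g1 by (simp add: field_simps)
      moreover have "P \<ge> 0" unfolding P_def using K by (intro divide_nonneg_nonneg mult_nonneg_nonneg less_imp_le[OF Gamma_real_pos]) auto
      ultimately show ?thesis using c0 co[of j] g1 U0[of j]
        by (simp add: ennreal_mult[symmetric])
    qed
    finally show "(\<integral>\<^sup>+ r. ennreal (c0 * co j) * (ennreal (exp (- (N/2) * r^2) * r^(2*j) * pZS K r) * indicator {0<..} r) \<partial>lborel) = ennreal (c * s j)" .
  qed
  finally have main: "(LBINT r:{0<..}. lik_r sg A y S lam r * pZS CARD('k) r) = enn2real (\<Sum>j. ennreal (c * s j))" .

  have sums: "summable s"
  proof (rule summable_comparison_test[where g="\<lambda>j. (N/2) powr (-(real K/2)) * ((N * nb^2 / 2)^j / fact j)"])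
    show "summable (\<lambda>j. (N/2) powr (-(real K/2)) * ((N * nb^2 / 2)^j / fact j))"
      using summable_exp[of "N * nb^2 / 2"] by (intro summable_mult) (simp only: divide_inverse_commute)
    show "\<exists>M. \<forall>j\<ge>M. norm (s j) \<le> (N/2) powr (-(real K/2)) * ((N * nb^2 / 2)^j / fact j)"
    proof (intro exI allI impI)
      fix j :: nat
      have Ub: "U j \<le> (N/2) powr (-(real K/2 + real j))"
        unfolding U_def using hyperU_nn(3)[OF \<alpha> _ \<beta>\<alpha>] N by simp
      have m: "-(real K/2 + real j) = -(real K/2) + -(real j)" by simp
      have pj: "(N/2) powr (-(real j)) = (2/N)^j"
        using N by (simp add: powr_minus powr_realpow inverse_divide flip: power_inverse)
      have pw: "(N/2) powr (-(real K/2 + real j)) = (N/2) powr (-(real K/2)) * (2/N)^j"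
        unfolding m powr_add pj ..
      have "s j \<le> 1 / fact j * (N^2 * nb^2 / 4)^j * ((N/2) powr (-(real K/2)) * (2/N)^j)"
        unfolding s_def pw[symmetric] using Ub by (intro mult_left_mono) (auto simp: nb)
      also have "\<dots> = (N/2) powr (-(real K/2)) * (((N^2 * nb^2 / 4) * (2/N))^j / fact j)"
        by (simp only: power_mult_distrib) (simp add: field_simps)
      also have "(N^2 * nb^2 / 4) * (2/N) = N * nb^2 / 2"
        using N by (simp add: field_simps power2_eq_square)
      finally show "norm (s j) \<le> (N/2) powr (-(real K/2)) * ((N * nb^2 / 2)^j / fact j)"
        using s0[of j] by simp
    qed
  qed
  have "(\<Sum>j. ennreal (c * s j)) = ennreal (\<Sum>j. c * s j)"
    using c s0 sums by (intro suminf_ennreal2) (auto intro: summable_mult)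
  then have "enn2real (\<Sum>j. ennreal (c * s j)) = c * (\<Sum>j. s j)"
    using c s0 sums by (simp add: suminf_mult suminf_nonneg)
  with main show ?thesis
    unfolding c_def s_def U_def N_def K_def nb_def by simp
qed


end
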